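(* For a multi-parameter family $\rho(\theta)=\sum_{k=1}^d p_k(\theta)|w_k(\theta)\rangle\langle w_k(\theta)|$ with a chosen smooth spectral decomposition as in the context, equality $H_{SLD}(\theta)=C_L(\theta)$ (as matrices) holds at $\theta$ if and only if $$\langle w_j^{(m)}(\theta)|w_k(\theta)\rangle=0\quad\text{for all } m\in\{1,\dots,p\}\text{ and all } j\neq k \text{ with } p_j(\theta)>0,\ p_k(\theta)>0.$$
   Context: Let $\Theta\subseteq\mathbb{R}^p$ be open and $\rho(\theta)=\sum_{k=1}^d p_k(\theta)|w_k(\theta)\rangle\langle w_k(\theta)|$, where $p_k:\Theta\to[0,1]$ are smooth with $\sum_k p_k=1$ and $|w_1(\theta)\rangle,\dots,|w_d(\theta)\rangle$ is an orthonormal basis of $\mathbb{C}^d$ depending smoothly on $\theta$. Write $|w_k^{(l)}\rangle=\frac{\partial}{\partial\theta^l}|w_k(\theta)\rangle$. Convention: indices $i$ with $p_i(\theta)=0$ are omitted from sums containing $1/p_i$. The $C_L$ quantum information is the $p\times p$ matrix $$C_L(\theta)_{kl}=\sum_i\frac{1}{p_i}\frac{\partial p_i}{\partial\theta^k}\frac{\partial p_i}{\partial\theta^l}+4\,\Re\sum_{i<j}(p_i+p_j)\langle w_i^{(k)}|w_j\rangle\langle w_j|w_i^{(l)}\rangle.$$ The SLD quantum information matrix is $H_{SLD}(\theta)_{kl}=\Re\,\mathrm{tr}\{\rho(\theta)\lambda_k(\theta)\lambda_l(\theta)\}$, where $\lambda_k(\theta)$ is any Hermitian solution of $\frac{\partial\rho}{\partial\theta^k}=\frac12(\rho\lambda_k+\lambda_k\rho)$.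 *)

theory Defs
  imports "HOL-Analysis.Analysis"
begin

definition pderiv_at :: "(real^'p \<Rightarrow> 'b::real_normed_vector) \<Rightarrow> 'p \<Rightarrow> real^'p \<Rightarrow> 'b" where
  "pderiv_at f l x = frechet_derivative f (at x) (axis l 1)"

fun Cn_on :: "nat \<Rightarrow> (real^'p) set \<Rightarrow> (real^'p \<Rightarrow> 'b::real_normed_vector) \<Rightarrow> bool" where
  "Cn_on 0 S f = continuous_on S f"
| "Cn_on (Suc n) S f = (continuous_on S f \<and> (\<forall>x\<in>S. f differentiable (at x))
      \<and> (\<forall>l. Cn_on n S (pderiv_at f l)))"

definition smooth_on :: "(real^'p) set \<Rightarrow> (real^'p \<Rightarrow> 'b::real_normed_vector) \<Rightarrow> bool" where
  "smooth_on S f = (\<forall>n. Cn_on n S f)"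

definition braket :: "complex^'d \<Rightarrow> complex^'d \<Rightarrow> complex" where
  "braket a b = (\<Sum>i\<in>UNIV. cnj (a$i) * b$i)"

definition mtrace :: "complex^'d^'d \<Rightarrow> complex" where
  "mtrace A = (\<Sum>i\<in>UNIV. A$i$i)"

definition hermitian :: "complex^'d^'d \<Rightarrow> bool" where
  "hermitian A = (\<forall>a b. A$a$b = cnj (A$b$a))"

definition dens :: "('d::finite \<Rightarrow> real^'p \<Rightarrow> real) \<Rightarrow> ('d \<Rightarrow> real^'p \<Rightarrow> complex^'d)
    \<Rightarrow> real^'p \<Rightarrow> complex^'d^'d" where
  "dens pr w x = (\<chi> a b. \<Sum>k\<in>UNIV. complex_of_real (pr k x) * (w k x)$a * cnj ((w k x)$b))"

definition CL_info :: "('d::{finite,linorder} \<Rightarrow> real^'p \<Rightarrow> real) \<Rightarrow> ('d \<Rightarrow> real^'p \<Rightarrow> (complex, 'd::{finite,linorder}) vec)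
    \<Rightarrow> real^'p \<Rightarrow> 'p \<Rightarrow> 'p \<Rightarrow> real" where
  "CL_info pr w x k l =
     (\<Sum>i\<in>{i. pr i x \<noteq> 0}. (1 / pr i x) * pderiv_at (pr i) k x * pderiv_at (pr i) l x)
     + 4 * Re (\<Sum>(i,j)\<in>{(i,j). i < j}.
          complex_of_real (pr i x + pr j x)
          * braket (pderiv_at (w i) k x) (w j x) * braket (w j x) (pderiv_at (w i) l x))"

definition SLD_info :: "complex^'d^'d \<Rightarrow> ('p \<Rightarrow> complex^'d^'d) \<Rightarrow> 'p \<Rightarrow> 'p \<Rightarrow> real" where
  "SLD_info r lam k l = Re (mtrace (r ** lam k ** lam l))"

definition is_SLD_family :: "(real^'p \<Rightarrow> complex^'d^'d) \<Rightarrow> real^'p \<Rightarrow> ('p \<Rightarrow> complex^'d^'d) \<Rightarrow> bool" where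
  "is_SLD_family rho x lam = (\<forall>k. hermitian (lam k) \<and>
      pderiv_at rho k x = (1/2::real) *\<^sub>R (rho x ** lam k + lam k ** rho x))"

end

theory Submission
  imports Defs
begin

lemma has_derivative_vec_lambda:
  fixes f :: "'i::finite \<Rightarrow> 'a::real_normed_vector \<Rightarrow> 'b::euclidean_space"
  assumes "\<And>i. (f i has_derivative f' i) (at x)"
  shows "((\<lambda>x. \<chi> i. f i x) has_derivative (\<lambda>h. \<chi> i. f' i h)) (at x)"
  apply (subst has_derivative_componentwise_within)
  apply (auto simp: Basis_vec_def inner_axis)
  apply (rule bounded_linear.has_derivative[OF bounded_linear_inner_left])
  apply (rule assms)
  done

lemma sum_pairs_split:
  fixes F :: "'d::{finite,linorder} \<Rightarrow> 'd \<Rightarrow> 'b::comm_monoid_add"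
  shows "(\<Sum>a\<in>UNIV. \<Sum>b\<in>UNIV. F a b) = (\<Sum>a\<in>UNIV. F a a) + (\<Sum>(a,b)\<in>{(a,b). a < b}. F a b + F b a)"
proof -
  have U: "(UNIV::('d\<times>'d) set) = (\<lambda>a. (a,a)) ` UNIV \<union> ({(a,b). a < b} \<union> {(a,b). b < a})"
  proof (rule set_eqI)
    fix x :: "'d\<times>'d" obtain a b where x: "x = (a,b)" by fastforce
    show "x \<in> UNIV \<longleftrightarrow> x \<in> (\<lambda>a. (a,a)) ` UNIV \<union> ({(a,b). a < b} \<union> {(a,b). b < a})"
      using linorder_neqE[of a b] by (auto simp: x)
  qed
  have "(\<Sum>a\<in>UNIV. \<Sum>b\<in>UNIV. F a b) = (\<Sum>(a,b)\<in>UNIV. F a b)"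
    by (simp add: sum.cartesian_product)
  also have "\<dots> = (\<Sum>(a,b)\<in>(\<lambda>a. (a,a)) ` UNIV. F a b) + (\<Sum>(a,b)\<in>{(a,b). a < b} \<union> {(a,b). b < a}. F a b)"
    by (subst U, rule sum.union_disjoint) auto
  also have "(\<Sum>(a,b)\<in>(\<lambda>a. (a,a)) ` UNIV. F a b) = (\<Sum>a\<in>UNIV. F a a)"
    by (subst sum.reindex) (auto simp: inj_on_def)
  also have "(\<Sum>(a,b)\<in>{(a,b). a < b} \<union> {(a,b). b < a}. F a b) = (\<Sum>(a,b)\<in>{(a,b). a < b}. F a b) + (\<Sum>(a,b)\<in>{(a,b). b < a}. F a b)"
    by (rule sum.union_disjoint) auto
  also have "(\<Sum>(a,b)\<in>{(a,b). b < a}. F a b) = (\<Sum>(a,b)\<in>{(a,b). a < b}. F b a)"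
  proof -
    have "{(a,b). b < a} = prod.swap ` {(a::'d,b). a < b}" by auto
    then show ?thesis by (simp add: sum.reindex case_prod_unfold)
  qed
  finally show ?thesis by (simp add: sum.distrib case_prod_unfold)
qed

lemma diag_term:
  fixes p dk dl :: real and Lk Ll :: complex
  assumes "p \<ge> 0" "complex_of_real p * Lk = complex_of_real dk" "complex_of_real p * Ll = complex_of_real dl"
  shows "Re (complex_of_real p * Lk * Ll) = dk * dl / p"
proof (cases "p = 0")
  case True then show ?thesis by simp
next
  case False
  then have "Lk = complex_of_real dk / complex_of_real p" "Ll = complex_of_real dl / complex_of_real p" using assms
    by (auto simp: eq_divide_eq mult.commute)
  then have e: "Lk = complex_of_real (dk / p)" "Ll = complex_of_real (dl/p)" by auto
  have "complex_of_real p * Lk * Ll = complex_of_real (p * (dk/p) * (dl/p))" by (simp add: e)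
  then show ?thesis using False by simp
qed

lemma pair_term:
  fixes pa pb :: real and Lkab Lkba Llab Llba Bk Bl :: complex
  assumes "pa \<ge> 0" "pb \<ge> 0"
    "complex_of_real ((pa+pb)/2) * Lkab = complex_of_real (pa-pb) * Bk"
    "complex_of_real ((pa+pb)/2) * Llab = complex_of_real (pa-pb) * Bl"
    "Lkba = cnj Lkab" "Llba = cnj Llab"
  shows "Re (complex_of_real pa * Lkab * Llba + complex_of_real pb * Lkba * Llab)
       = 4 * (pa-pb)^2 / (pa+pb) * Re (Bk * cnj Bl)"
proof (cases "pa + pb = 0")
  case True then have "pa = 0" "pb = 0" using assms by auto
  then show ?thesis by simp
next
  case False
  define t where "t = 2*(pa-pb)/(pa+pb)"
  have nz: "complex_of_real ((pa+pb)/2) \<noteq> 0" using False by (simp only: of_real_eq_0_iff) simp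
  have "Lkab = complex_of_real (pa-pb) * Bk / complex_of_real ((pa+pb)/2)"
       "Llab = complex_of_real (pa-pb) * Bl / complex_of_real ((pa+pb)/2)"
    using assms(3,4) nz by (auto simp: eq_divide_eq mult.commute)
  moreover have "complex_of_real (pa-pb) * Bk / complex_of_real ((pa+pb)/2) = complex_of_real t * Bk"
     "complex_of_real (pa-pb) * Bl / complex_of_real ((pa+pb)/2) = complex_of_real t * Bl"
    by (simp_all add: t_def field_simps)
  ultimately have "Lkab = complex_of_real t * Bk" "Llab = complex_of_real t * Bl" by auto
  then have "Re (complex_of_real pa * Lkab * Llba + complex_of_real pb * Lkba * Llab)
     = t^2 * (pa+pb) * Re (Bk * cnj Bl)"
    using assms(5,6) by (simp add: algebra_simps power2_eq_square)
  also have "t^2 * (pa+pb) = 4 * (pa-pb)^2 / (pa+pb)"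
  proof -
    have g: "\<And>(x::real) (y::real). y \<noteq> 0 \<Longrightarrow> (x / y)^2 * y = x^2 / y" by (simp add: power2_eq_square)
    show ?thesis unfolding t_def using g[OF False, of "2*(pa-pb)"] by (simp add: power2_eq_square algebra_simps)
  qed
  finally show ?thesis .
qed

lemma core:
  fixes p :: "'d::{finite,linorder} \<Rightarrow> real" and dp :: "'p \<Rightarrow> 'd \<Rightarrow> real"
    and L B :: "'p \<Rightarrow> 'd \<Rightarrow> 'd \<Rightarrow> complex"
  assumes p0: "\<And>a. p a \<ge> 0"
    and Bsk: "\<And>k a b. B k b a = - cnj (B k a b)"
    and Lh: "\<And>k a b. L k b a = cnj (L k a b)"
    and sld: "\<And>k a b. complex_of_real ((p a + p b)/2) * L k a b
        = (if a = b then complex_of_real (dp k a) else 0) + complex_of_real (p a - p b) * B k a b"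
  shows "(\<forall>k l. Re (\<Sum>a\<in>UNIV. \<Sum>b\<in>UNIV. complex_of_real (p a) * L k a b * L l b a)
            = (\<Sum>i\<in>{i. p i \<noteq> 0}. 1 / p i * dp k i * dp l i)
              + 4 * Re (\<Sum>(i,j)\<in>{(i,j). i < j}. complex_of_real (p i + p j) * B k i j * cnj (B l i j)))
     \<longleftrightarrow> (\<forall>m j k. j \<noteq> k \<and> p j > 0 \<and> p k > 0 \<longrightarrow> B m j k = 0)"
proof -
  define Q where "Q k l a b = Re (B k a b * cnj (B l a b))" for k l a b
  define r where "r a b = p a * p b / (p a + p b)" for a b
  have H: "Re (\<Sum>a\<in>UNIV. \<Sum>b\<in>UNIV. complex_of_real (p a) * L k a b * L l b a)
     = (\<Sum>a\<in>UNIV. dp k a * dp l a / p a) + (\<Sum>(a,b)\<in>{(a,b). a < b}. 4 * (p a - p b)^2 / (p a + p b) * Q k l a b)"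
    for k l
  proof -
    have "Re (\<Sum>a\<in>UNIV. \<Sum>b\<in>UNIV. complex_of_real (p a) * L k a b * L l b a)
      = (\<Sum>a\<in>UNIV. Re (complex_of_real (p a) * L k a a * L l a a))
        + (\<Sum>(a,b)\<in>{(a,b). a < b}. Re (complex_of_real (p a) * L k a b * L l b a + complex_of_real (p b) * L k b a * L l a b))"
      by (subst sum_pairs_split) (simp add: Re_sum case_prod_unfold)
    also have "(\<Sum>a\<in>UNIV. Re (complex_of_real (p a) * L k a a * L l a a)) = (\<Sum>a\<in>UNIV. dp k a * dp l a / p a)"
    proof (rule sum.cong[OF refl])
      fix a
      have "complex_of_real (p a) * L m a a = complex_of_real (dp m a)" for m
        using sld[where k=m and a=a and b=a] by simp
      then show "Re (complex_of_real (p a) * L k a a * L l a a) = dp k a * dp l a / p a"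
        by (intro diag_term p0)
    qed
    also have "(\<Sum>(a,b)\<in>{(a,b). a < b}. Re (complex_of_real (p a) * L k a b * L l b a + complex_of_real (p b) * L k b a * L l a b))
       = (\<Sum>(a,b)\<in>{(a,b). a < b}. 4 * (p a - p b)^2 / (p a + p b) * Q k l a b)"
    proof (rule sum.cong[OF refl], clarify)
      fix a b :: 'd assume "a < b"
      then have "a \<noteq> b" by simp
      then have "complex_of_real ((p a + p b)/2) * L m a b = complex_of_real (p a - p b) * B m a b" for m
        using sld[where k=m and a=a and b=b] by simp
      then show "Re (complex_of_real (p a) * L k a b * L l b a + complex_of_real (p b) * L k b a * L l a b)
         = 4 * (p a - p b)^2 / (p a + p b) * Q k l a b"
        unfolding Q_def by (intro pair_term p0 Lh)
    qed
    finally show ?thesis .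
  qed
  have C: "(\<Sum>i\<in>{i. p i \<noteq> 0}. 1 / p i * dp k i * dp l i)
              + 4 * Re (\<Sum>(i,j)\<in>{(i,j). i < j}. complex_of_real (p i + p j) * B k i j * cnj (B l i j))
     = (\<Sum>a\<in>UNIV. dp k a * dp l a / p a) + (\<Sum>(a,b)\<in>{(a,b). a < b}. 4 * (p a + p b) * Q k l a b)" for k l
  proof -
    have "(\<Sum>i\<in>{i. p i \<noteq> 0}. 1 / p i * dp k i * dp l i) = (\<Sum>a\<in>UNIV. dp k a * dp l a / p a)"
      by (rule sum.mono_neutral_cong_left) auto
    moreover have "4 * Re (\<Sum>(i,j)\<in>{(i,j). i < j}. complex_of_real (p i + p j) * B k i j * cnj (B l i j))
       = (\<Sum>(a,b)\<in>{(a,b). a < b}. 4 * (p a + p b) * Q k l a b)"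
      unfolding Re_sum sum_distrib_left by (rule sum.cong) (auto simp: Q_def algebra_simps)
    ultimately show ?thesis by simp
  qed
  have D: "(Re (\<Sum>a\<in>UNIV. \<Sum>b\<in>UNIV. complex_of_real (p a) * L k a b * L l b a)
            = (\<Sum>i\<in>{i. p i \<noteq> 0}. 1 / p i * dp k i * dp l i)
              + 4 * Re (\<Sum>(i,j)\<in>{(i,j). i < j}. complex_of_real (p i + p j) * B k i j * cnj (B l i j)))
        \<longleftrightarrow> (\<Sum>(a,b)\<in>{(a,b). a < b}. r a b * Q k l a b) = 0" for k l
  proof -
    have pt: "4 * (p a + p b) * Q k l a b - 4 * (p a - p b)^2 / (p a + p b) * Q k l a b = 16 * (r a b * Q k l a b)" for a b
    proof (cases "p a + p b = 0")
      case True then have "p a = 0" "p b = 0" using p0[of a] p0[of b] by auto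
      then show ?thesis by (simp add: r_def)
    next
      case False
      then show ?thesis by (simp add: r_def field_simps power2_eq_square)
    qed
    have "(\<Sum>(a,b)\<in>{(a,b). a < b}. 4 * (p a + p b) * Q k l a b) - (\<Sum>(a,b)\<in>{(a,b). a < b}. 4 * (p a - p b)^2 / (p a + p b) * Q k l a b)
       = 16 * (\<Sum>(a,b)\<in>{(a,b). a < b}. r a b * Q k l a b)"
      unfolding sum_subtractf[symmetric] sum_distrib_left case_prod_unfold using pt by (intro sum.cong) auto
    then show ?thesis unfolding H C by linarith
  qed
  have Qkk: "Q k k a b = (cmod (B k a b))^2" for k a b
    unfolding Q_def by (simp add: complex_mult_cnj cmod_power2)
  have r0: "r a b \<ge> 0" for a b using p0[of a] p0[of b] by (simp add: r_def)
  have "(\<forall>k l. (\<Sum>(a,b)\<in>{(a,b). a < b}. r a b * Q k l a b) = 0)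
     \<longleftrightarrow> (\<forall>m j k. j \<noteq> k \<and> p j > 0 \<and> p k > 0 \<longrightarrow> B m j k = 0)"
  proof
    assume A: "\<forall>k l. (\<Sum>(a,b)\<in>{(a,b). a < b}. r a b * Q k l a b) = 0" 
    show "\<forall>m j k. j \<noteq> k \<and> p j > 0 \<and> p k > 0 \<longrightarrow> B m j k = 0"
    proof (intro allI impI)
      fix m j k assume jk: "j \<noteq> k \<and> p j > 0 \<and> p k > 0"
      have S: "(\<Sum>(a,b)\<in>{(a,b). a < b}. r a b * Q m m a b) = 0" using A by blast
      have z: "r a b * Q m m a b = 0" if "a < b" for a b
      proof -
        have "\<forall>x\<in>{(a,b). a < b}. (\<lambda>(a,b). r a b * Q m m a b) x = 0"
          by (rule sum_nonneg_eq_0_iff[THEN iffD1, OF _ _ S]) (auto simp: Qkk r0)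
        then show ?thesis using that by auto
      qed
      have rp: "r a b > 0" if "p a > 0" "p b > 0" for a b using that by (simp add: r_def)
      show "B m j k = 0"
      proof (cases "j < k")
        case True
        then show ?thesis using z[OF True] rp[of j k] jk by (simp add: Qkk)
      next
        case False
        then have "k < j" using jk by auto
        then have "B m k j = 0" using z[of k j] rp[of k j] jk by (simp add: Qkk)
        then show ?thesis using Bsk[where k=m and a=k and b=j] by simp
      qed
    qed
  next
    assume A: "\<forall>m j k. j \<noteq> k \<and> p j > 0 \<and> p k > 0 \<longrightarrow> B m j k = 0"
    show "\<forall>k l. (\<Sum>(a,b)\<in>{(a,b). a < b}. r a b * Q k l a b) = 0"
    proof (intro allI)
      fix k l
      have "r a b * Q k l a b = 0" if "a < b" for a b
      proof (cases "p a > 0 \<and> p b > 0")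
        case True then show ?thesis using A that by (simp add: Q_def)
      next
        case False then have "p a = 0 \<or> p b = 0" using p0[of a] p0[of b] by auto
        then show ?thesis by (auto simp: r_def)
      qed
      then show "(\<Sum>(a,b)\<in>{(a,b). a < b}. r a b * Q k l a b) = 0" by (intro sum.neutral) auto
    qed
  qed
  then show ?thesis by (simp only: D)
qed

lemma braket_cnj: "braket y x = cnj (braket x y)"
  by (simp add: braket_def mult.commute)

lemma braket_add_right: "braket u (x + y) = braket u x + braket u y"
  by (simp add: braket_def sum.distrib distrib_left)

lemma braket_lin:
  fixes u :: "complex^'d" and x :: "'k \<Rightarrow> complex^'d"
  assumes "finite K"
  shows "braket u (\<chi> i. \<Sum>k\<in>K. f k * x k $ i) = (\<Sum>k\<in>K. f k * braket u (x k))"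
  unfolding braket_def using assms
  by (simp add: sum_distrib_left mult_ac sum.swap[of _ K])

lemma outer_mv:
  fixes x y :: "'k::finite \<Rightarrow> complex^'d" and z :: "complex^'d"
  shows "(\<chi> i j. \<Sum>k\<in>UNIV. c k * x k $ i * cnj (y k $ j)) *v z = (\<chi> i. \<Sum>k\<in>UNIV. (c k * braket (y k) z) * x k $ i)"
  unfolding matrix_vector_mult_def braket_def vec_eq_iff
  apply (simp add: sum_distrib_left sum_distrib_right)
  apply (subst sum.swap)
  apply (simp add: mult_ac)
  done

lemma braket_mv_scale_add:
  fixes X Y :: "complex^'d^'d"
  shows "braket u (((c::real) *\<^sub>R (X + Y)) *v z) = complex_of_real c * (braket u (X *v z) + braket u (Y *v z))"
  unfolding braket_def matrix_vector_mult_def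
  apply (simp only: vector_scaleR_component vec_lambda_beta vector_add_component)
  apply (simp add: sum_distrib_left sum.distrib[symmetric] algebra_simps scaleR_conv_of_real)
  done

lemma braket_herm:
  assumes "hermitian M"
  shows "braket u (M *v z) = cnj (braket z (M *v u))"
proof -
  have h: "\<And>a b. cnj (M$a$b) = M$b$a" using assms unfolding hermitian_def by (metis complex_cnj_cnj)
  show ?thesis
  unfolding braket_def matrix_vector_mult_def
  apply (simp add: sum_distrib_left sum_distrib_right h)
  apply (subst sum.swap)
  apply (simp add: mult_ac)
  done
qed

lemma sum3:
  fixes F :: "'a::finite \<Rightarrow> 'b::finite \<Rightarrow> 'c::finite \<Rightarrow> 'r::comm_monoid_add"
  shows "(\<Sum>i\<in>UNIV. \<Sum>k\<in>UNIV. \<Sum>n\<in>UNIV. F i k n) = (\<Sum>n\<in>UNIV. \<Sum>k\<in>UNIV. \<Sum>i\<in>UNIV. F i k n)"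
proof -
  have "(\<Sum>i\<in>UNIV. \<Sum>k\<in>UNIV. \<Sum>n\<in>UNIV. F i k n) = (\<Sum>i\<in>UNIV. \<Sum>n\<in>UNIV. \<Sum>k\<in>UNIV. F i k n)"
    by (rule sum.cong[OF refl], rule sum.swap)
  also have "\<dots> = (\<Sum>n\<in>UNIV. \<Sum>i\<in>UNIV. \<Sum>k\<in>UNIV. F i k n)" by (rule sum.swap)
  also have "\<dots> = (\<Sum>n\<in>UNIV. \<Sum>k\<in>UNIV. \<Sum>i\<in>UNIV. F i k n)"
    by (rule sum.cong[OF refl], rule sum.swap)
  finally show ?thesis .
qed

lemma trace_outer:
  fixes x :: "'d::finite \<Rightarrow> complex^'d"
  shows "mtrace ((\<chi> i j. \<Sum>k\<in>UNIV. c k * x k $ i * cnj (x k $ j)) ** M) = (\<Sum>k\<in>UNIV. c k * braket (x k) (M *v x k))"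
  unfolding mtrace_def matrix_matrix_mult_def braket_def matrix_vector_mult_def
  apply (simp add: sum_distrib_left sum_distrib_right)
  apply (subst sum3)
  apply (simp add: mult_ac)
  done

lemma mv_lin:
  fixes v :: "'k::finite \<Rightarrow> complex^'d" and M :: "complex^'d^'m"
  shows "M *v (\<chi> j. \<Sum>b\<in>UNIV. c b * v b $ j) = (\<chi> i. \<Sum>b\<in>UNIV. c b * (M *v v b) $ i)"
  unfolding matrix_vector_mult_def vec_eq_iff
  apply (simp add: sum_distrib_left)
  apply (subst sum.swap)
  apply (simp add: mult_ac)
  done

lemma braket_complete:
  fixes v :: "'d::finite \<Rightarrow> complex^'d"
  assumes compl: "\<And>j j'. (\<Sum>b\<in>UNIV. v b $ j * cnj (v b $ j')) = (if j = j' then 1 else 0)"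
  shows "braket u (M *v y) = (\<Sum>b\<in>UNIV. braket u (M *v v b) * braket (v b) y)"
proof -
  have y: "y = (\<chi> j. \<Sum>b\<in>UNIV. braket (v b) y * v b $ j)"
  proof -
    have "(\<Sum>b\<in>UNIV. braket (v b) y * v b $ j) = (\<Sum>j'\<in>UNIV. (\<Sum>b\<in>UNIV. v b $ j * cnj (v b $ j')) * y $ j')" for j
      unfolding braket_def
      apply (simp add: sum_distrib_left sum_distrib_right)
      apply (subst sum.swap)
      apply (simp add: mult_ac)
      done
    moreover have "(\<Sum>j'\<in>UNIV. (if j = j' then 1 else 0) * y $ j') = y $ j" for j
    proof -
      have "(\<Sum>j'\<in>UNIV. (if j = j' then 1 else 0) * y $ j') = (\<Sum>j'\<in>UNIV. (if j = j' then y $ j' else 0))"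
        by (rule sum.cong) auto
      then show ?thesis by simp
    qed
    ultimately show ?thesis unfolding compl by (simp add: vec_eq_iff)
  qed
  have "M *v y = (\<chi> i. \<Sum>b\<in>UNIV. braket (v b) y * (M *v v b) $ i)"
    using mv_lin[of M "\<lambda>b. braket (v b) y" v] y by metis
  then have "braket u (M *v y) = (\<Sum>b\<in>UNIV. braket (v b) y * braket u (M *v v b))"
    by (simp add: braket_lin)
  then show ?thesis by (simp add: mult.commute)
qed

lemma smooth_diff: "smooth_on S f \<Longrightarrow> x \<in> S \<Longrightarrow> f differentiable (at x)"
  unfolding smooth_on_def by (metis Cn_on.simps(2))

lemma pderiv_has: "(f has_derivative f') (at x) \<Longrightarrow> pderiv_at f l x = f' (axis l 1)"
  unfolding pderiv_at_def by (metis frechet_derivative_at)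

lemma braket_deriv0:
  fixes w :: "'d \<Rightarrow> real^'p \<Rightarrow> complex^'d::finite"
  assumes hw: "\<And>a. (w a has_derivative W' a) (at t)"
    and op: "open S" and tS: "t \<in> S"
    and orth: "\<And>x. x \<in> S \<Longrightarrow> braket (w a x) (w b x) = c"
  shows "braket (W' a h) (w b t) + braket (w a t) (W' b h) = 0"
proof -
  have comp: "((\<lambda>x. w k x $ i) has_derivative (\<lambda>h. W' k h $ i)) (at t)" for k i
    by (rule bounded_linear.has_derivative[OF bounded_linear_vec_nth hw])
  have "((\<lambda>x. \<Sum>i\<in>UNIV. cnj (w a x $ i) * w b x $ i) has_derivative
      (\<lambda>h. \<Sum>i\<in>UNIV. cnj (w a t $ i) * W' b h $ i + cnj (W' a h $ i) * w b t $ i)) (at t)"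
    by (intro has_derivative_sum has_derivative_mult has_derivative_cnj comp)
  then have D1: "((\<lambda>x. braket (w a x) (w b x)) has_derivative
      (\<lambda>h. braket (W' a h) (w b t) + braket (w a t) (W' b h))) (at t)"
    unfolding braket_def by (simp add: sum.distrib add.commute)
  have "((\<lambda>x. c) has_derivative (\<lambda>h. 0)) (at t within UNIV)" by simp
  then have "((\<lambda>x. braket (w a x) (w b x)) has_derivative (\<lambda>h. 0)) (at t within UNIV)"
    by (rule has_derivative_transform_within_open[OF _ op tS]) (simp add: orth)
  then have D2: "((\<lambda>x. braket (w a x) (w b x)) has_derivative (\<lambda>h. 0)) (at t)" by simp
  have "(\<lambda>h. braket (W' a h) (w b t) + braket (w a t) (W' b h)) = (\<lambda>h. 0)"
    by (rule has_derivative_unique[OF D1 D2])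
  then show ?thesis by metis
qed

lemma dens_deriv:
  fixes w :: "'d::finite \<Rightarrow> real^'p \<Rightarrow> complex^'d" and pr :: "'d \<Rightarrow> real^'p \<Rightarrow> real"
  assumes hw: "\<And>a. (w a has_derivative W' a) (at t)"
    and hp: "\<And>a. (pr a has_derivative P' a) (at t)"
  shows "(dens pr w has_derivative (\<lambda>h. \<chi> i j. \<Sum>k\<in>UNIV.
        complex_of_real (P' k h) * w k t $ i * cnj (w k t $ j)
      + complex_of_real (pr k t) * W' k h $ i * cnj (w k t $ j)
      + complex_of_real (pr k t) * w k t $ i * cnj (W' k h $ j))) (at t)"
proof -
  have comp: "((\<lambda>x. w k x $ i) has_derivative (\<lambda>h. W' k h $ i)) (at t)" for k i
    by (rule bounded_linear.has_derivative[OF bounded_linear_vec_nth hw])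
  have e: "dens pr w = (\<lambda>x. \<chi> i j. \<Sum>k\<in>UNIV. complex_of_real (pr k x) * w k x $ i * cnj (w k x $ j))"
    by (rule ext) (simp add: dens_def)
  have c: "((\<lambda>x. \<Sum>k\<in>UNIV. complex_of_real (pr k x) * w k x $ i * cnj (w k x $ j)) has_derivative
     (\<lambda>h. \<Sum>k\<in>UNIV.
        complex_of_real (P' k h) * w k t $ i * cnj (w k t $ j)
      + complex_of_real (pr k t) * W' k h $ i * cnj (w k t $ j)
      + complex_of_real (pr k t) * w k t $ i * cnj (W' k h $ j))) (at t)" for i j
    apply (rule has_derivative_eq_rhs)
     apply (rule has_derivative_sum)
     apply (rule has_derivative_mult)+
       apply (rule has_derivative_of_real, rule hp)
      apply (rule comp)
     apply (rule has_derivative_cnj, rule comp)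
    apply (rule ext)
    apply (simp add: algebra_simps)
    done
  show ?thesis unfolding e
    by (intro has_derivative_vec_lambda c)
qed

theorem lemma7:
  fixes \<Theta> :: "(real^'p) set"
    and pr :: "'d::{finite,linorder} \<Rightarrow> real^'p \<Rightarrow> real"
    and w :: "'d \<Rightarrow> real^'p \<Rightarrow> (complex, 'd::{finite,linorder}) vec"
    and \<theta> :: "real^'p"
    and lam :: "'p \<Rightarrow> ((complex, 'd::{finite,linorder}) vec, 'd::{finite,linorder}) vec"
  assumes "open \<Theta>"
    and "\<And>k. smooth_on \<Theta> (pr k)"
    and "\<And>k x. x \<in> \<Theta> \<Longrightarrow> 0 \<le> pr k x \<and> pr k x \<le> 1"
    and "\<And>x. x \<in> \<Theta> \<Longrightarrow> (\<Sum>k\<in>UNIV. pr k x) = 1"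
    and "\<And>k. smooth_on \<Theta> (w k)"
    and "\<And>j k x. x \<in> \<Theta> \<Longrightarrow> braket (w j x) (w k x) = (if j = k then 1 else 0)"
    and "\<theta> \<in> \<Theta>"
    and "is_SLD_family (dens pr w) \<theta> lam"
  shows "(\<forall>k l. SLD_info (dens pr w \<theta>) lam k l = CL_info pr w \<theta> k l) \<longleftrightarrow>
         (\<forall>m j k. j \<noteq> k \<and> pr j \<theta> > 0 \<and> pr k \<theta> > 0 \<longrightarrow>
            braket (pderiv_at (w j) m \<theta>) (w k \<theta>) = 0)"
proof -
  note op = assms(1) and tS = assms(7) and orth = assms(6)
  define v where "v a = w a \<theta>" for a
  define p where "p a = pr a \<theta>" for a
  define W' where "W' a = frechet_derivative (w a) (at \<theta>)" for a
  define P' where "P' a = frechet_derivative (pr a) (at \<theta>)" for a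
  define dp where "dp m a = pderiv_at (pr a) m \<theta>" for m a
  define Dw where "Dw m a = pderiv_at (w a) m \<theta>" for m a
  define B where "B m a b = braket (Dw m a) (v b)" for m a b
  define L where "L k a b = braket (v a) (lam k *v v b)" for k a b
  define rho where "rho = dens pr w \<theta>"
  have hw: "(w a has_derivative W' a) (at \<theta>)" for a
    unfolding W'_def using smooth_diff[OF assms(5) tS] frechet_derivative_works by blast
  have hp: "(pr a has_derivative P' a) (at \<theta>)" for a
    unfolding P'_def using smooth_diff[OF assms(2) tS] frechet_derivative_works by blast
  have Dw_eq: "Dw m a = W' a (axis m 1)" for m a unfolding Dw_def by (rule pderiv_has[OF hw])
  have dp_eq: "dp m a = P' a (axis m 1)" for m a unfolding dp_def by (rule pderiv_has[OF hp])
  have ortho: "braket (v a) (v b) = (if a = b then 1 else 0)" for a b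
    unfolding v_def using orth[OF tS] .
  have D1: "braket (Dw m a) (v b) + braket (v a) (Dw m b) = 0" for m a b
    unfolding Dw_eq v_def
    by (rule braket_deriv0[OF hw op tS orth])
  have compl: "(\<Sum>b\<in>UNIV. v b $ j * cnj (v b $ j')) = (if j = j' then 1 else 0)" for j j'
  proof -
    define V where "V = (\<chi> i b. v b $ i)"
    define Vh where "Vh = (\<chi> b i. cnj (v b $ i))"
    have "Vh ** V = mat 1"
      using ortho unfolding V_def Vh_def matrix_matrix_mult_def mat_def braket_def
      by (simp add: vec_eq_iff)
    then have "V ** Vh = mat 1" by (simp add: matrix_left_right_inverse)
    then have "(V ** Vh) $ j $ j' = mat 1 $ j $ j'" by simp
    then show ?thesis unfolding V_def Vh_def matrix_matrix_mult_def mat_def by simp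
  qed
  have p0: "p a \<ge> 0" for a unfolding p_def using assms(3)[OF tS] by simp
  have Bsk: "B m b a = - cnj (B m a b)" for m a b
  proof -
    have "B m b a = cnj (braket (v a) (Dw m b))" unfolding B_def by (rule braket_cnj)
    also have "braket (v a) (Dw m b) = - B m a b" using D1[of m a b] unfolding B_def
      by (simp add: eq_neg_iff_add_eq_0 add.commute)
    finally show ?thesis by simp
  qed
  have herm: "hermitian (lam k)" for k using assms(8) unfolding is_SLD_family_def by blast
  have Lh: "L k b a = cnj (L k a b)" for k a b
    unfolding L_def by (rule braket_herm[OF herm])
  have rho_eq: "rho = (\<chi> i j. \<Sum>k\<in>UNIV. complex_of_real (p k) * v k $ i * cnj (v k $ j))"
    unfolding rho_def dens_def p_def v_def ..
  have rho_mv: "rho *v z = (\<chi> i. \<Sum>k\<in>UNIV. (complex_of_real (p k) * braket (v k) z) * v k $ i)" for z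
    unfolding rho_eq by (rule outer_mv)
  have ME_rhoM: "braket (v a) ((rho ** M) *v v b) = complex_of_real (p a) * braket (v a) (M *v v b)" for a b M
  proof -
    have "braket (v a) ((rho ** M) *v v b) = braket (v a) (rho *v (M *v v b))"
      by (simp add: matrix_vector_mul_assoc)
    also have "\<dots> = (\<Sum>k\<in>UNIV. (complex_of_real (p k) * braket (v k) (M *v v b)) * braket (v a) (v k))"
      unfolding rho_mv by (simp add: braket_lin)
    also have "\<dots> = complex_of_real (p a) * braket (v a) (M *v v b)"
      by (simp add: ortho if_distrib cong: if_cong)
    finally show ?thesis .
  qed
  have ME_Mrho: "braket (v a) ((M ** rho) *v v b) = complex_of_real (p b) * braket (v a) (M *v v b)" for a b M
  proof -
    have "braket (v a) ((M ** rho) *v v b) = braket (v a) (M *v (rho *v v b))"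
      by (simp add: matrix_vector_mul_assoc)
    also have "M *v (rho *v v b) = (\<chi> i. \<Sum>k\<in>UNIV. (complex_of_real (p k) * braket (v k) (v b)) * (M *v v k) $ i)"
      unfolding rho_mv by (rule mv_lin)
    also have "braket (v a) \<dots> = (\<Sum>k\<in>UNIV. (complex_of_real (p k) * braket (v k) (v b)) * braket (v a) (M *v v k))"
      by (simp add: braket_lin)
    also have "\<dots> = (\<Sum>k\<in>UNIV. if k = b then complex_of_real (p b) * braket (v a) (M *v v b) else 0)"
      by (rule sum.cong) (auto simp: ortho)
    also have "\<dots> = complex_of_real (p b) * braket (v a) (M *v v b)"
      by simp
    finally show ?thesis .
  qed
  have Drho: "pderiv_at (dens pr w) m \<theta> = (\<chi> i j. \<Sum>k\<in>UNIV.
        complex_of_real (dp m k) * v k $ i * cnj (v k $ j)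
      + complex_of_real (p k) * Dw m k $ i * cnj (v k $ j)
      + complex_of_real (p k) * v k $ i * cnj (Dw m k $ j))" for m
    unfolding pderiv_has[OF dens_deriv[OF hw hp]] dp_eq Dw_eq p_def v_def by simp
  have split3: "(\<chi> i j. \<Sum>k\<in>UNIV.
        complex_of_real (dp m k) * v k $ i * cnj (v k $ j)
      + complex_of_real (p k) * Dw m k $ i * cnj (v k $ j)
      + complex_of_real (p k) * v k $ i * cnj (Dw m k $ j))
     = (\<chi> i j. \<Sum>k\<in>UNIV. complex_of_real (dp m k) * v k $ i * cnj (v k $ j))
     + (\<chi> i j. \<Sum>k\<in>UNIV. complex_of_real (p k) * Dw m k $ i * cnj (v k $ j))
     + (\<chi> i j. \<Sum>k\<in>UNIV. complex_of_real (p k) * v k $ i * cnj (Dw m k $ j))" for m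
    by (simp add: vec_eq_iff sum.distrib)
  have delta: "(\<Sum>k\<in>UNIV. f k * (if k = b then 1 else 0)) = f b" for f :: "'d \<Rightarrow> complex" and b
  proof -
    have "(\<Sum>k\<in>UNIV. f k * (if k = b then 1 else 0)) = (\<Sum>k\<in>UNIV. if k = b then f b else 0)"
      by (rule sum.cong) auto
    then show ?thesis by simp
  qed
  have delta': "(\<Sum>k\<in>UNIV. f k * (if a = k then 1 else 0)) = f a" for f :: "'d \<Rightarrow> complex" and a
  proof -
    have "(\<Sum>k\<in>UNIV. f k * (if a = k then 1 else 0)) = (\<Sum>k\<in>UNIV. if k = a then f a else 0)"
      by (rule sum.cong) auto
    then show ?thesis by simp
  qed
  have d1: "(\<Sum>k\<in>UNIV. f k * (if k = b then 1 else 0) * g k) = f b * g b" for f g :: "'d \<Rightarrow> complex" and b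
  proof -
    have "(\<Sum>k\<in>UNIV. f k * (if k = b then 1 else 0) * g k) = (\<Sum>k\<in>UNIV. if k = b then f b * g b else 0)"
      by (rule sum.cong) auto
    then show ?thesis by simp
  qed
  have d2: "(\<Sum>k\<in>UNIV. f k * g k * (if a = k then 1 else 0)) = f a * g a" for f g :: "'d \<Rightarrow> complex" and a
  proof -
    have "(\<Sum>k\<in>UNIV. f k * g k * (if a = k then 1 else 0)) = (\<Sum>k\<in>UNIV. if k = a then f a * g a else 0)"
      by (rule sum.cong) auto
    then show ?thesis by simp
  qed
  have bscal: "braket u (\<chi> i. c * x $ i) = c * braket u x" for u x :: "(complex, 'd) vec" and c
    unfolding braket_def by (simp add: sum_distrib_left mult_ac)
  have ME_Drho: "braket (v a) (pderiv_at (dens pr w) m \<theta> *v v b)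
      = (if a = b then complex_of_real (dp m a) else 0) + complex_of_real (p a - p b) * B m a b" for m a b
  proof -
    have t1: "braket (v a) ((\<chi> i j. \<Sum>k\<in>UNIV. complex_of_real (dp m k) * v k $ i * cnj (v k $ j)) *v v b)
        = (if a = b then complex_of_real (dp m a) else 0)"
      unfolding outer_mv by (simp only: braket_lin[OF finite] ortho delta') simp
    have t2: "braket (v a) ((\<chi> i j. \<Sum>k\<in>UNIV. complex_of_real (p k) * Dw m k $ i * cnj (v k $ j)) *v v b)
        = complex_of_real (p b) * braket (v a) (Dw m b)"
      unfolding outer_mv by (simp only: braket_lin[OF finite] ortho d1 bscal)
    have t3: "braket (v a) ((\<chi> i j. \<Sum>k\<in>UNIV. complex_of_real (p k) * v k $ i * cnj (Dw m k $ j)) *v v b)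
        = complex_of_real (p a) * B m a b"
      unfolding outer_mv B_def by (simp only: braket_lin[OF finite] ortho d2 bscal)
    have b2: "braket (v a) (Dw m b) = - B m a b" using D1[of m a b] unfolding B_def
      by (simp add: eq_neg_iff_add_eq_0 add.commute)
    show ?thesis
      unfolding Drho split3 matrix_vector_mult_add_rdistrib braket_add_right t1 t2 t3 b2
      by (simp add: algebra_simps)
  qed
  have sld: "complex_of_real ((p a + p b)/2) * L k a b
        = (if a = b then complex_of_real (dp k a) else 0) + complex_of_real (p a - p b) * B k a b" for k a b
  proof -
    have e: "pderiv_at (dens pr w) k \<theta> = (1/2::real) *\<^sub>R (rho ** lam k + lam k ** rho)"
      using assms(8) unfolding is_SLD_family_def rho_def by blast
    have "(if a = b then complex_of_real (dp k a) else 0) + complex_of_real (p a - p b) * B k a b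
       = braket (v a) (pderiv_at (dens pr w) k \<theta> *v v b)" by (rule ME_Drho[symmetric])
    also have "\<dots> = complex_of_real (1/2) * (complex_of_real (p a) * L k a b + complex_of_real (p b) * L k a b)"
      unfolding e braket_mv_scale_add ME_rhoM ME_Mrho L_def ..
    also have "\<dots> = complex_of_real ((p a + p b)/2) * L k a b"
      by (simp add: algebra_simps)
    finally show ?thesis by simp
  qed
  have SLD: "SLD_info rho lam k l = Re (\<Sum>a\<in>UNIV. \<Sum>b\<in>UNIV. complex_of_real (p a) * L k a b * L l b a)" for k l
  proof -
    have "mtrace (rho ** lam k ** lam l) = mtrace (rho ** (lam k ** lam l))" by (simp add: matrix_mul_assoc)
    also have "\<dots> = (\<Sum>a\<in>UNIV. complex_of_real (p a) * braket (v a) ((lam k ** lam l) *v v a))"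
      unfolding rho_eq by (rule trace_outer)
    also have "\<dots> = (\<Sum>a\<in>UNIV. complex_of_real (p a) * (\<Sum>b\<in>UNIV. L k a b * L l b a))"
      unfolding matrix_vector_mul_assoc[symmetric] L_def
      by (subst braket_complete[OF compl]) simp
    also have "\<dots> = (\<Sum>a\<in>UNIV. \<Sum>b\<in>UNIV. complex_of_real (p a) * L k a b * L l b a)"
      by (simp add: sum_distrib_left mult.assoc)
    finally show ?thesis unfolding SLD_info_def by simp
  qed
  have CL: "CL_info pr w \<theta> k l = (\<Sum>i\<in>{i. p i \<noteq> 0}. 1 / p i * dp k i * dp l i)
              + 4 * Re (\<Sum>(i,j)\<in>{(i,j). i < j}. complex_of_real (p i + p j) * B k i j * cnj (B l i j))" for k l
  proof -
    have "braket (w j \<theta>) (pderiv_at (w i) l \<theta>) = cnj (B l i j)" for i j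
      unfolding B_def Dw_def v_def by (rule braket_cnj)
    then show ?thesis unfolding CL_info_def
      by (simp add: p_def dp_def B_def Dw_def v_def)
  qed
  have main: "(\<forall>k l. Re (\<Sum>a\<in>UNIV. \<Sum>b\<in>UNIV. complex_of_real (p a) * L k a b * L l b a)
            = (\<Sum>i\<in>{i. p i \<noteq> 0}. 1 / p i * dp k i * dp l i)
              + 4 * Re (\<Sum>(i,j)\<in>{(i,j). i < j}. complex_of_real (p i + p j) * B k i j * cnj (B l i j)))
     \<longleftrightarrow> (\<forall>m j k. j \<noteq> k \<and> p j > 0 \<and> p k > 0 \<longrightarrow> B m j k = 0)"
    by (rule core[OF p0 Bsk Lh sld])
  show ?thesis
    using main unfolding SLD[symmetric] CL[symmetric] rho_def
    by (simp add: B_def Dw_def v_def p_def)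
qed

end
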